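(* For every finite simple graph $G$ we have $m(G)\le |E(\overline{G})|+2$, where $\overline{G}$ is the complement of $G$.
   Context: All graphs are finite, simple and undirected. A list assignment $L$ for a graph $G$ assigns to each vertex $v$ a set $L(v)$ of colors; an $L$-coloring is a proper vertex coloring $c$ of $G$ with $c(v)\in L(v)$ for every vertex $v$. A $k$-list assignment is a list assignment with $|L(v)|=k$ for all $v$. $G$ is uniquely $k$-list colorable (U$k$LC) if there exists a $k$-list assignment $L$ such that $G$ has exactly one $L$-coloring. $G$ has property $M(k)$ if it is not U$k$LC, i.e. for every $k$-list assignment $L$, $G$ has either no $L$-coloring or at least two $L$-colorings. The m-number $m(G)$ is the least integer $k\ge 1$ such that $G$ has property $M(k)$. (Every U$k$LC graph is also U$(k-1)$LC, so $G$ is U$k$LC iff $k<m(G)$.) *)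

theory Defs
  imports Main "HOL-Library.FuncSet"
begin

definition simple_graph :: "'a set \<Rightarrow> ('a \<Rightarrow> 'a \<Rightarrow> bool) \<Rightarrow> bool" where
  "simple_graph V E \<longleftrightarrow> finite V \<and>
     (\<forall>u v. E u v \<longrightarrow> u \<in> V \<and> v \<in> V \<and> u \<noteq> v \<and> E v u)"

definition complement_edges :: "'a set \<Rightarrow> ('a \<Rightarrow> 'a \<Rightarrow> bool) \<Rightarrow> 'a set set" where
  "complement_edges V E = {{u, v} | u v. u \<in> V \<and> v \<in> V \<and> u \<noteq> v \<and> \<not> E u v}"

definition k_list_assignment :: "'a set \<Rightarrow> ('a \<Rightarrow> nat set) \<Rightarrow> nat \<Rightarrow> bool" where
  "k_list_assignment V L k \<longleftrightarrow> (\<forall>v\<in>V. finite (L v) \<and> card (L v) = k)"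

definition L_coloring :: "'a set \<Rightarrow> ('a \<Rightarrow> 'a \<Rightarrow> bool) \<Rightarrow> ('a \<Rightarrow> nat set) \<Rightarrow> ('a \<Rightarrow> nat) \<Rightarrow> bool" where
  "L_coloring V E L c \<longleftrightarrow> c \<in> extensional V \<and> (\<forall>v\<in>V. c v \<in> L v) \<and>
     (\<forall>u\<in>V. \<forall>v\<in>V. E u v \<longrightarrow> c u \<noteq> c v)"

definition uniquely_list_colorable :: "'a set \<Rightarrow> ('a \<Rightarrow> 'a \<Rightarrow> bool) \<Rightarrow> nat \<Rightarrow> bool" where
  "uniquely_list_colorable V E k \<longleftrightarrow>
     (\<exists>L. k_list_assignment V L k \<and> (\<exists>!c. L_coloring V E L c))"

definition property_M :: "'a set \<Rightarrow> ('a \<Rightarrow> 'a \<Rightarrow> bool) \<Rightarrow> nat \<Rightarrow> bool" where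
  "property_M V E k \<longleftrightarrow> \<not> uniquely_list_colorable V E k"

definition m_number :: "'a set \<Rightarrow> ('a \<Rightarrow> 'a \<Rightarrow> bool) \<Rightarrow> nat" where
  "m_number V E = (LEAST k. 1 \<le> k \<and> property_M V E k)"

end

theory Submission
  imports Defs
begin

lemma endo_bij_subset:
  "finite S \<Longrightarrow> S \<noteq> {} \<Longrightarrow> f ` S \<subseteq> S \<Longrightarrow> \<exists>T\<subseteq>S. T \<noteq> {} \<and> f ` T = T"
proof (induction "card S" arbitrary: S rule: less_induct)
  case less
  show ?case
  proof (cases "f ` S = S")
    case True then show ?thesis using less.prems(2) by (intro exI[of _ S]) simp
  next
    case False
    hence psub: "f ` S \<subset> S" using less.prems(3) by (simp add: psubset_eq)
    hence "card (f ` S) < card S" using less.prems(1) by (simp add: psubset_card_mono)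
    moreover have "finite (f ` S)" using less.prems by simp
    moreover have "f ` S \<noteq> {}" using less.prems by simp
    moreover have "f ` (f ` S) \<subseteq> f ` S" using less.prems(3) by (rule image_mono)
    ultimately have "\<exists>T\<subseteq>f ` S. T \<noteq> {} \<and> f ` T = T" by (rule less.hyps)
    then obtain T where "T \<subseteq> f ` S" "T \<noteq> {}" "f ` T = T" by blast
    then show ?thesis using psub by (intro exI[of _ T]) auto
  qed
qed

lemma complete_case:
  assumes fin: "finite V" and ne: "V \<noteq> {}" and compl: "\<forall>u\<in>V. \<forall>w\<in>V. u \<noteq> w \<longrightarrow> E u w"
  and L2: "\<forall>v\<in>V. finite (L v) \<and> card (L v) \<ge> 2" and col: "L_coloring V E L c"
  shows "\<exists>c'. c' \<noteq> c \<and> L_coloring V E L c'"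
proof -
  have cext: "c \<in> extensional V" and cL: "\<forall>v\<in>V. c v \<in> L v"
    and cE: "\<forall>u\<in>V. \<forall>v\<in>V. E u v \<longrightarrow> c u \<noteq> c v"
    using col unfolding L_coloring_def by auto
  have inj: "inj_on c V" using compl cE unfolding inj_on_def by blast
  have "\<forall>v\<in>V. \<exists>x. x \<in> L v \<and> x \<noteq> c v"
  proof
    fix v assume v: "v \<in> V"
    show "\<exists>x. x \<in> L v \<and> x \<noteq> c v"
    proof (rule ccontr)
      assume "\<not> ?thesis"
      hence "L v \<subseteq> {c v}" by blast
      hence "card (L v) \<le> 1" using card_mono[OF finite.insertI[OF finite.emptyI]] by fastforce
      with L2 v show False by force
    qed
  qed
  then obtain a where a: "\<forall>v\<in>V. a v \<in> L v \<and> a v \<noteq> c v" by metis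
  show ?thesis
  proof (cases "\<exists>v\<in>V. a v \<notin> c ` V")
    case True
    then obtain v where v: "v \<in> V" "a v \<notin> c ` V" by blast
    define c' where "c' = c(v := a v)"
    have "L_coloring V E L c'"
      unfolding L_coloring_def
    proof (intro conjI ballI impI)
      show "c' \<in> extensional V" using cext v unfolding c'_def extensional_def by auto
      show "c' x \<in> L x" if "x \<in> V" for x using that a cL unfolding c'_def by auto
      show "c' x \<noteq> c' y" if "x \<in> V" "y \<in> V" "E x y" for x y
      proof -
        have "x \<noteq> y" using cE that by blast
        then show ?thesis using that v cE unfolding c'_def by (auto simp: image_iff)
      qed
    qed
    moreover have "c' \<noteq> c" using a v unfolding c'_def by (metis fun_upd_same)
    ultimately show ?thesis by blast
  next
    case False
    hence av: "\<forall>v\<in>V. a v \<in> c ` V" by blast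
    define f where "f v = (SOME u. u \<in> V \<and> c u = a v)" for v
    have f: "\<forall>v\<in>V. f v \<in> V \<and> c (f v) = a v"
    proof
      fix v assume "v \<in> V"
      then have "\<exists>u. u \<in> V \<and> c u = a v" using av by force
      then show "f v \<in> V \<and> c (f v) = a v" unfolding f_def by (rule someI_ex)
    qed
    have fne: "\<forall>v\<in>V. f v \<noteq> v" using f a by metis
    obtain S where S: "S \<subseteq> V" "S \<noteq> {}" "f ` S = S"
      using endo_bij_subset[of V f] fin ne f by blast
    have finS: "finite S" using S fin finite_subset by blast
    have injf: "inj_on f S" using S(3) finS by (simp add: inj_on_iff_eq_card)
    define c' where "c' x = (if x \<in> S then c (f x) else c x)" for x
    have "L_coloring V E L c'"
      unfolding L_coloring_def
    proof (intro conjI ballI impI)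
      show "c' \<in> extensional V" using cext S unfolding c'_def extensional_def by auto
      show "c' x \<in> L x" if "x \<in> V" for x using that a cL f unfolding c'_def by auto
      show "c' x \<noteq> c' y" if xy: "x \<in> V" "y \<in> V" "E x y" for x y
      proof -
        have "x \<noteq> y" using cE that by blast
        have fS: "z \<in> S \<Longrightarrow> f z \<in> S" for z using S by blast
        consider "x \<in> S" "y \<in> S" | "x \<in> S" "y \<notin> S" | "x \<notin> S" "y \<in> S" | "x \<notin> S" "y \<notin> S" by blast
        then show ?thesis
        proof cases
          case 1
          then have "f x \<noteq> f y" using injf \<open>x \<noteq> y\<close> unfolding inj_on_def by blast
          moreover have "f x \<in> V" "f y \<in> V" using 1 S f by blast+
          ultimately have "c (f x) \<noteq> c (f y)" using inj by (simp add: inj_on_eq_iff)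
          then show ?thesis using 1 unfolding c'_def by simp
        next
          case 2
          then have "f x \<noteq> y" using fS by blast
          moreover have "f x \<in> V" using 2 S f by blast
          ultimately have "c (f x) \<noteq> c y" using inj xy by (simp add: inj_on_eq_iff)
          then show ?thesis using 2 unfolding c'_def by simp
        next
          case 3
          then have "f y \<noteq> x" using fS by blast
          moreover have "f y \<in> V" using 3 S f by blast
          ultimately have "c x \<noteq> c (f y)" using inj xy by (simp add: inj_on_eq_iff)
          then show ?thesis using 3 unfolding c'_def by simp
        next
          case 4
          then show ?thesis using cE xy unfolding c'_def by auto
        qed
      qed
    qed
    moreover have "c' \<noteq> c"
    proof -
      obtain x where x: "x \<in> S" using S by blast
      then have xV: "x \<in> V" using S by blast
      have "c' x = a x" using x xV f unfolding c'_def by simp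
      then have "c' x \<noteq> c x" using a xV by simp
      then show ?thesis by metis
    qed
    ultimately show ?thesis by blast
  qed
qed

lemma main:
  assumes "finite V" "V \<noteq> {}" "\<forall>u v. E u v \<longrightarrow> E v u"
   "\<forall>v\<in>V. finite (L v) \<and> card (L v) \<ge> card (complement_edges V E) + 2"
   "L_coloring V E L c"
  shows "\<exists>c'. c' \<noteq> c \<and> L_coloring V E L c'"
  using assms
proof (induction "card V" arbitrary: V L c rule: less_induct)
  case less
  note fin = less.prems(1) and ne = less.prems(2) and sym = less.prems(3)
    and Lc = less.prems(4) and col = less.prems(5)
  have cext: "c \<in> extensional V" and cL: "\<forall>v\<in>V. c v \<in> L v"
    and cE: "\<forall>u\<in>V. \<forall>v\<in>V. E u v \<longrightarrow> c u \<noteq> c v"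
    using col unfolding L_coloring_def by auto
  show ?case
  proof (cases "\<forall>u\<in>V. \<forall>w\<in>V. u \<noteq> w \<longrightarrow> E u w")
    case True
    have "\<forall>v\<in>V. finite (L v) \<and> card (L v) \<ge> 2" using Lc by force
    then show ?thesis using complete_case[OF fin ne True _ col] by blast
  next
    case False
    then obtain v w where vw: "v\<in>V" "w\<in>V" "v\<noteq>w" "\<not>E v w" by blast
    define V' where "V' = V - {v}"
    define L' where "L' = (\<lambda>u. if E u v then L u - {c v} else L u)"
    define c0 where "c0 = restrict c V'"
    have "complement_edges V E \<subseteq> Pow V" unfolding complement_edges_def by blast
    hence finCE: "finite (complement_edges V E)" using fin by (meson finite_Pow_iff finite_subset)
    have "complement_edges V' E \<subseteq> complement_edges V E"
      unfolding complement_edges_def V'_def by blast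
    moreover have "{v, w} \<in> complement_edges V E"
      unfolding complement_edges_def using vw by blast
    moreover have "{v, w} \<notin> complement_edges V' E"
      unfolding complement_edges_def V'_def by (auto simp: doubleton_eq_iff)
    ultimately have "complement_edges V' E \<subset> complement_edges V E" by blast
    hence cardlt: "card (complement_edges V' E) < card (complement_edges V E)"
      using finCE by (simp add: psubset_card_mono)
    have L': "\<forall>u\<in>V'. finite (L' u) \<and> card (L' u) \<ge> card (complement_edges V' E) + 2"
    proof
      fix u assume u: "u \<in> V'"
      then have uV: "u \<in> V" unfolding V'_def by blast
      have "card (L u - {c v}) \<ge> card (L u) - 1" by (simp add: card_Diff_singleton_if)
      then show "finite (L' u) \<and> card (L' u) \<ge> card (complement_edges V' E) + 2"
        using Lc uV cardlt unfolding L'_def by auto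
    qed
    have col': "L_coloring V' E L' c0"
      unfolding L_coloring_def
    proof (intro conjI ballI impI)
      show "c0 \<in> extensional V'" unfolding c0_def by simp
      show "c0 x \<in> L' x" if "x \<in> V'" for x
        using that cL cE vw unfolding c0_def L'_def V'_def by auto
      show "c0 x \<noteq> c0 y" if "x \<in> V'" "y \<in> V'" "E x y" for x y
        using that cE unfolding c0_def V'_def by auto
    qed
    have "card V' < card V" unfolding V'_def by (rule card_Diff1_less[OF fin vw(1)])
    moreover have "V' \<noteq> {}" using vw unfolding V'_def by blast
    moreover have "finite V'" using fin unfolding V'_def by simp
    ultimately obtain d where d: "d \<noteq> c0" "L_coloring V' E L' d"
      using less.hyps[of V' L' c0] sym L' col' by blast
    have dext: "d \<in> extensional V'" and dL: "\<forall>u\<in>V'. d u \<in> L' u"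
      and dE: "\<forall>x\<in>V'. \<forall>y\<in>V'. E x y \<longrightarrow> d x \<noteq> d y"
      using d(2) unfolding L_coloring_def by auto
    define c' where "c' = d(v := c v)"
    have "L_coloring V E L c'"
      unfolding L_coloring_def
    proof (intro conjI ballI impI)
      show "c' \<in> extensional V" using dext vw unfolding c'_def extensional_def V'_def by auto
      show "c' x \<in> L x" if "x \<in> V" for x
        using that dL cL vw unfolding c'_def L'_def V'_def by (auto split: if_splits)
      show "c' x \<noteq> c' y" if xy: "x \<in> V" "y \<in> V" "E x y" for x y
      proof -
        have "x \<noteq> y" using cE that by blast
        show ?thesis
        proof (cases "x = v")
          case True
          then have "y \<in> V'" "E y v" using xy \<open>x \<noteq> y\<close> sym unfolding V'_def by auto
          then show ?thesis using dL True \<open>x \<noteq> y\<close> unfolding c'_def L'_def by auto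
        next
          case False
          note xv = False
          show ?thesis
          proof (cases "y = v")
            case True
            then have "x \<in> V'" "E x v" using xy xv unfolding V'_def by auto
            then show ?thesis using dL True xv unfolding c'_def L'_def by auto
          next
            case False
            then show ?thesis using xv xy dE unfolding c'_def V'_def by auto
          qed
        qed
      qed
    qed
    moreover have "c' \<noteq> c"
    proof -
      obtain x where x: "d x \<noteq> c0 x" using d(1) by blast
      have "x \<in> V'"
      proof (rule ccontr)
        assume "x \<notin> V'"
        then have "d x = undefined" "c0 x = undefined"
          using dext unfolding c0_def extensional_def by auto
        with x show False by simp
      qed
      then have "x \<noteq> v" "c' x \<noteq> c x" using x unfolding c'_def c0_def V'_def by auto
      then show ?thesis by metis
    qed
    ultimately show ?thesis by blast
  qed
qed

theorem lemma2p1: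
  fixes V :: "'a set" and E :: "'a \<Rightarrow> 'a \<Rightarrow> bool"
  assumes "simple_graph V E" and "V \<noteq> {}"
  shows "m_number V E \<le> card (complement_edges V E) + 2"
proof -
  let ?k = "card (complement_edges V E) + 2"
  have fin: "finite V" and sym: "\<forall>u v. E u v \<longrightarrow> E v u"
    using assms(1) unfolding simple_graph_def by auto
  have P: "property_M V E ?k"
    unfolding property_M_def uniquely_list_colorable_def
  proof
    assume "\<exists>L. k_list_assignment V L ?k \<and> (\<exists>!c. L_coloring V E L c)"
    then obtain L where L: "k_list_assignment V L ?k" and ex: "\<exists>!c. L_coloring V E L c"
      by blast
    from ex obtain c where c: "L_coloring V E L c"
      and u: "\<forall>c'. L_coloring V E L c' \<longrightarrow> c' = c" by (rule ex1E)
    have "\<forall>v\<in>V. finite (L v) \<and> card (L v) \<ge> ?k" using L unfolding k_list_assignment_def by auto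
    then obtain c' where "c' \<noteq> c" "L_coloring V E L c'"
      using main[OF fin assms(2) sym _ c] by blast
    with u show False by blast
  qed
  show ?thesis unfolding m_number_def by (rule Least_le) (rule conjI[OF _ P], simp)
qed

end
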